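(* Under Assumption A(b),(c) in setting (E), let $\omega\in(0,1]$, set $\widetilde S^{-1}:=Gx^0$ and for $k\ge0$ $$\widetilde S^k:=(1-\omega)\big[\widetilde S^{k-1}+2G_{\mathcal B_k}x^k-3G_{\mathcal B_k}x^{k-1}+G_{\mathcal B_k}x^{k-2}\big]+\omega\,\overline S^k_{\hat{\mathcal B}_k},$$ where $\mathcal B_k$ is a fresh i.i.d. mini-batch of size $b$, $\hat{\mathcal B}_k$ a fresh i.i.d. mini-batch of size $\hat b$ (possibly overlapping with $\mathcal B_k$), and $\overline S^k_{\hat{\mathcal B}_k}$ is built from $\hat{\mathcal B}_k$ with $\mathbb E_{\hat{\mathcal B}_k}[\overline S^k_{\hat{\mathcal B}_k}]=S^k$ and $\sigma_k^2:=\mathbb E_{\hat{\mathcal B}_k}\|\overline S^k_{\hat{\mathcal B}_k}-S^k\|^2$. Then $\widetilde S^k$ belongs to class (B) with $\Delta_k:=\|\widetilde S^k-S^k\|^2$, $\tau=\omega$, $\kappa=\omega(2-\omega)$, $\Theta=\frac{8C(1-\omega)^2L^2}{b}$, $\hat\Theta=\frac{2C(1-\omega)^2L^2}{b}$, $\delta_k=C\omega^2\sigma_k^2$, where $C=1$ if $\mathcal B_k$ and $\hat{\mathcal B}_k$ are independent and $C=2$ otherwise.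
   Context: Setting: $G:\mathbb{R}^p\to\mathbb{R}^p$, $T:\mathbb{R}^p\rightrightarrows\mathbb{R}^p$, $\Phi:=G+T$, $J_{\eta T}:=(\mathbb{I}+\eta T)^{-1}$. (E): $Gx=\mathbb{E}_{\zeta\sim\mathbb P}[\mathbf G(x,\zeta)]$. $G_{\mathcal B}x:=\frac1{|\mathcal B|}\sum_{\zeta\in\mathcal B}\mathbf G(x,\zeta)$; i.i.d. mini-batches are samples drawn i.i.d. from $\mathbb P$ independently of the past. Assumption A: (b) $\mathbb{E}_\zeta\|\mathbf G(x,\zeta)-Gx\|^2\le\sigma^2$; (c) $\mathbb{E}_\zeta\|\mathbf G(x,\zeta)-\mathbf G(y,\zeta)\|^2\le L^2\|x-y\|^2$. Scheme (VrFRBS): stepsize $\eta>0$, $x^0$, $x^{-2}=x^{-1}=x^0$, $\xi^0\in Tx^0$; for $k\ge0$: $S^k:=2Gx^k-Gx^{k-1}$, estimator $\widetilde S^k$, $x^{k+1}\in J_{\eta T}(x^k-\eta\widetilde S^k)$, $\xi^{k+1}:=\eta^{-1}(x^k-\eta\widetilde S^k-x^{k+1})\in Tx^{k+1}$; $e^k:=\widetilde S^k-S^k$. $\mathcal F_k$: $\sigma$-algebra of all randomness up to iteration $k$; $\mathbb E_k[\cdot]:=\mathbb E[\cdot\mid\mathcal F_k]$. Class (B): there exist nonnegative random variables $\Delta_k$ ($\Delta_{-1}:=0$), $\tau,\kappa\in(0,1]$, $\Theta,\hat\Theta\ge0$, nonnegative $\{\delta_k\}$ such that with $e^{-1}:=0$,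 a.s. for all $k\ge0$: $\mathbb E_k[e^k]=(1-\tau)e^{k-1}$; $\mathbb E_k\|e^k\|^2\le\mathbb E_k[\Delta_k]$; $\mathbb E_k[\Delta_k]\le(1-\kappa)\Delta_{k-1}+\Theta\|x^k-x^{k-1}\|^2+\hat\Theta\|x^{k-1}-x^{k-2}\|^2+\delta_k$. *)

theory Defs
  imports "HOL-Probability.Probability"
begin

definition batch_law :: "'z measure \<Rightarrow> nat \<Rightarrow> (nat \<Rightarrow> 'z) measure" where
  "batch_law P n = (\<Pi>\<^sub>M j\<in>{..<n}. P)"

definition batch_op :: "('a \<Rightarrow> 'z \<Rightarrow> 'b::real_vector) \<Rightarrow> nat \<Rightarrow> (nat \<Rightarrow> 'z) \<Rightarrow> 'a \<Rightarrow> 'b" where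
  "batch_op Gs n \<beta> x = (1 / real n) *\<^sub>R (\<Sum>j<n. Gs x (\<beta> j))"

text \<open>The variance-reduced estimator of the theorem at iteration k, as a function of the
  fresh batches (beta = B_k, betah = hat B_k), with the past x^k, x^{k-1}, x^{k-2} and
  tilde S^{k-1} frozen.\<close>
definition vr_est ::
  "('a \<Rightarrow> 'z \<Rightarrow> 'a::real_vector) \<Rightarrow> nat \<Rightarrow> real \<Rightarrow> 'a \<Rightarrow> ((nat \<Rightarrow> 'z) \<Rightarrow> 'a)
    \<Rightarrow> 'a \<Rightarrow> 'a \<Rightarrow> 'a \<Rightarrow> (nat \<Rightarrow> 'z) \<Rightarrow> (nat \<Rightarrow> 'z) \<Rightarrow> 'a" where
  "vr_est Gs b \<omega> Sprev Sbar xk xk1 xk2 \<beta> \<beta>h =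
     (1 - \<omega>) *\<^sub>R (Sprev + 2 *\<^sub>R batch_op Gs b \<beta> xk - 3 *\<^sub>R batch_op Gs b \<beta> xk1
                     + batch_op Gs b \<beta> xk2) + \<omega> *\<^sub>R Sbar \<beta>h"

text \<open>One step of class (B): Q is the law of the fresh randomness of iteration k (so that
  E_k is integration w.r.t. Q with the F_k-measurable past frozen); e = e^k, Delta = Delta_k
  as functions of the fresh randomness; eprev = e^{k-1}, Dprev = Delta_{k-1};
  dx = ||x^k-x^{k-1}||^2, dx' = ||x^{k-1}-x^{k-2}||^2; delta = delta_k.\<close>
definition classB_step ::
  "'w measure \<Rightarrow> ('w \<Rightarrow> 'a::euclidean_space) \<Rightarrow> ('w \<Rightarrow> real) \<Rightarrow> 'a \<Rightarrow> real
    \<Rightarrow> real \<Rightarrow> real \<Rightarrow> real \<Rightarrow> real \<Rightarrow> real \<Rightarrow> real \<Rightarrow> ennreal \<Rightarrow> bool" where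
  "classB_step Q e \<Delta> eprev Dprev \<tau> \<kappa> \<Theta> \<Theta>h dx dx' \<delta> \<longleftrightarrow>
     0 < \<tau> \<and> \<tau> \<le> 1 \<and> 0 < \<kappa> \<and> \<kappa> \<le> 1 \<and> 0 \<le> \<Theta> \<and> 0 \<le> \<Theta>h \<and> 0 \<le> Dprev \<and>
     (\<forall>w\<in>space Q. 0 \<le> \<Delta> w) \<and>
     integrable Q e \<and> (\<integral>w. e w \<partial>Q) = (1 - \<tau>) *\<^sub>R eprev \<and>
     (\<integral>\<^sup>+w. ennreal ((norm (e w))\<^sup>2) \<partial>Q) \<le> (\<integral>\<^sup>+w. ennreal (\<Delta> w) \<partial>Q) \<and>
     (\<integral>\<^sup>+w. ennreal (\<Delta> w) \<partial>Q) \<le> ennreal ((1 - \<kappa>) * Dprev + \<Theta> * dx + \<Theta>h * dx') + \<delta>"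

end

theory Submission
  imports Defs
begin


lemma pim_comp:
  fixes h :: "'z \<Rightarrow> 'b::{banach,second_countable_topology}"
  assumes P: "prob_space P" and i: "i \<in> I" and h: "h \<in> borel_measurable P"
  shows "integrable (PiM I (\<lambda>_. P)) (\<lambda>\<beta>. h (\<beta> i)) \<longleftrightarrow> integrable P h"
    and "(\<integral>\<beta>. h (\<beta> i) \<partial>PiM I (\<lambda>_. P)) = (\<integral>z. h z \<partial>P)"
proof -
  have d: "distr (PiM I (\<lambda>_. P)) P (\<lambda>\<beta>. \<beta> i) = P"
    using distr_PiM_component[of I "\<lambda>_. P" i] P i by simp
  have m: "(\<lambda>\<beta>. \<beta> i) \<in> measurable (PiM I (\<lambda>_. P)) P"
    using i by (rule measurable_component_singleton)
  show "integrable (PiM I (\<lambda>_. P)) (\<lambda>\<beta>. h (\<beta> i)) \<longleftrightarrow> integrable P h"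
    using integrable_distr_eq[OF m h] d by simp
  show "(\<integral>\<beta>. h (\<beta> i) \<partial>PiM I (\<lambda>_. P)) = (\<integral>z. h z \<partial>P)"
    using integral_distr[OF m h] d by simp
qed

lemma pim_cross:
  fixes f g :: "'z \<Rightarrow> real"
  assumes P: "prob_space P" and I: "finite I" "i \<in> I" "j \<in> I" "i \<noteq> j"
    and f: "integrable P f" and g: "integrable P g"
  shows "integrable (PiM I (\<lambda>_. P)) (\<lambda>\<beta>. f (\<beta> i) * g (\<beta> j))"
    and "(\<integral>\<beta>. f (\<beta> i) * g (\<beta> j) \<partial>PiM I (\<lambda>_. P)) = integral\<^sup>L P f * integral\<^sup>L P g"
proof -
  interpret prob_space P by fact
  interpret product_sigma_finite "\<lambda>_. P"
    unfolding product_sigma_finite_def by (simp add: sigma_finite_measure_axioms)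
  define h where "h k = (if k = i then f else if k = j then g else (\<lambda>_. 1::real))" for k
  have eq: "(\<Prod>k\<in>I. h k (\<beta> k)) = f (\<beta> i) * g (\<beta> j)" for \<beta>
  proof -
    have "(\<Prod>k\<in>I. h k (\<beta> k)) = h i (\<beta> i) * (\<Prod>k\<in>I-{i}. h k (\<beta> k))"
      using I by (intro prod.remove) auto
    also have "(\<Prod>k\<in>I-{i}. h k (\<beta> k)) = h j (\<beta> j) * (\<Prod>k\<in>I-{i}-{j}. h k (\<beta> k))"
      using I by (intro prod.remove) auto
    also have "(\<Prod>k\<in>I-{i}-{j}. h k (\<beta> k)) = 1"
      by (rule prod.neutral) (auto simp: h_def)
    finally show ?thesis using I by (simp add: h_def)
  qed
  have eq2: "(\<Prod>k\<in>I. integral\<^sup>L P (h k)) = integral\<^sup>L P f * integral\<^sup>L P g"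
  proof -
    have "(\<Prod>k\<in>I. integral\<^sup>L P (h k)) = integral\<^sup>L P (h i) * (\<Prod>k\<in>I-{i}. integral\<^sup>L P (h k))"
      using I by (intro prod.remove) auto
    also have "(\<Prod>k\<in>I-{i}. integral\<^sup>L P (h k)) = integral\<^sup>L P (h j) * (\<Prod>k\<in>I-{i}-{j}. integral\<^sup>L P (h k))"
      using I by (intro prod.remove) auto
    also have "(\<Prod>k\<in>I-{i}-{j}. integral\<^sup>L P (h k)) = 1"
      by (rule prod.neutral) (auto simp: h_def prob_space)
    finally show ?thesis using I by (simp add: h_def)
  qed
  have hi: "integrable P (h k)" for k using f g by (simp add: h_def)
  show "integrable (PiM I (\<lambda>_. P)) (\<lambda>\<beta>. f (\<beta> i) * g (\<beta> j))"
    using product_integrable_prod[OF I(1), of h] hi by (simp add: eq)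
  show "(\<integral>\<beta>. f (\<beta> i) * g (\<beta> j) \<partial>PiM I (\<lambda>_. P)) = integral\<^sup>L P f * integral\<^sup>L P g"
    using product_integral_prod[OF I(1), of h] hi by (simp add: eq eq2)
qed

lemma pim_inner_cross:
  fixes U :: "'z \<Rightarrow> 'a::euclidean_space"
  assumes P: "prob_space P" and I: "finite I" "i \<in> I" "j \<in> I" "i \<noteq> j"
    and U: "integrable P U" and U0: "integral\<^sup>L P U = 0"
  shows "integrable (PiM I (\<lambda>_. P)) (\<lambda>\<beta>. U (\<beta> i) \<bullet> U (\<beta> j))"
    and "(\<integral>\<beta>. U (\<beta> i) \<bullet> U (\<beta> j) \<partial>PiM I (\<lambda>_. P)) = 0"
proof -
  have eq: "(\<lambda>\<beta>. U (\<beta> i) \<bullet> U (\<beta> j)) = (\<lambda>\<beta>. \<Sum>e\<in>Basis. (U (\<beta> i) \<bullet> e) * (U (\<beta> j) \<bullet> e))"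
    by (rule ext, rule euclidean_inner)
  have ie: "integrable P (\<lambda>z. U z \<bullet> e)" for e using U by simp
  show "integrable (PiM I (\<lambda>_. P)) (\<lambda>\<beta>. U (\<beta> i) \<bullet> U (\<beta> j))"
    unfolding eq by (intro Bochner_Integration.integrable_sum pim_cross[OF P I] ie)
  have "(\<integral>\<beta>. (\<Sum>e\<in>Basis. (U (\<beta> i) \<bullet> e) * (U (\<beta> j) \<bullet> e)) \<partial>PiM I (\<lambda>_. P))
        = (\<Sum>e\<in>Basis. (\<integral>\<beta>. (U (\<beta> i) \<bullet> e) * (U (\<beta> j) \<bullet> e) \<partial>PiM I (\<lambda>_. P)))"
    by (intro Bochner_Integration.integral_sum pim_cross[OF P I] ie)
  also have "\<dots> = (\<Sum>e\<in>Basis. (\<integral>z. U z \<bullet> e \<partial>P) * (\<integral>z. U z \<bullet> e \<partial>P))"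
    by (intro sum.cong refl pim_cross[OF P I] ie)
  also have "\<dots> = 0" using U U0 by simp
  finally show "(\<integral>\<beta>. U (\<beta> i) \<bullet> U (\<beta> j) \<partial>PiM I (\<lambda>_. P)) = 0" unfolding eq .
qed

lemma pim_sum_sq:
  fixes U :: "'z \<Rightarrow> 'a::euclidean_space"
  assumes P: "prob_space P" and U: "integrable P U" and U0: "integral\<^sup>L P U = 0"
    and U2: "integrable P (\<lambda>z. (norm (U z))\<^sup>2)"
  shows "integrable (PiM {..<n} (\<lambda>_. P)) (\<lambda>\<beta>. (norm (\<Sum>j<n. U (\<beta> j)))\<^sup>2)"
    and "(\<integral>\<beta>. (norm (\<Sum>j<n. U (\<beta> j)))\<^sup>2 \<partial>PiM {..<n} (\<lambda>_. P)) = real n * (\<integral>z. (norm (U z))\<^sup>2 \<partial>P)"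
proof -
  have Um: "U \<in> borel_measurable P" using U by auto
  have eq: "(norm (\<Sum>j<n. U (\<beta> j)))\<^sup>2 = (\<Sum>i<n. \<Sum>j<n. U (\<beta> j) \<bullet> U (\<beta> i))" for \<beta>
    by (simp add: power2_norm_eq_inner inner_sum_left inner_sum_right)
  have diag: "integrable (PiM {..<n} (\<lambda>_. P)) (\<lambda>\<beta>. U (\<beta> i) \<bullet> U (\<beta> i))"
     "(\<integral>\<beta>. U (\<beta> i) \<bullet> U (\<beta> i) \<partial>PiM {..<n} (\<lambda>_. P)) = (\<integral>z. (norm (U z))\<^sup>2 \<partial>P)"
    if "i < n" for i
  proof -
    have m: "(\<lambda>z. (norm (U z))\<^sup>2) \<in> borel_measurable P" using Um by measurable
    have "integrable (PiM {..<n} (\<lambda>_. P)) (\<lambda>\<beta>. (norm (U (\<beta> i)))\<^sup>2)"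
      using pim_comp(1)[OF P _ m, of i "{..<n}"] that U2 by simp
    then show "integrable (PiM {..<n} (\<lambda>_. P)) (\<lambda>\<beta>. U (\<beta> i) \<bullet> U (\<beta> i))"
      by (simp add: power2_norm_eq_inner)
    show "(\<integral>\<beta>. U (\<beta> i) \<bullet> U (\<beta> i) \<partial>PiM {..<n} (\<lambda>_. P)) = (\<integral>z. (norm (U z))\<^sup>2 \<partial>P)"
      using pim_comp(2)[OF P _ m, of i "{..<n}"] that by (simp add: power2_norm_eq_inner)
  qed
  have each0: "integrable (PiM {..<n} (\<lambda>_. P)) (\<lambda>\<beta>. U (\<beta> i) \<bullet> U (\<beta> j)) \<and>
    (\<integral>\<beta>. U (\<beta> i) \<bullet> U (\<beta> j) \<partial>PiM {..<n} (\<lambda>_. P)) = (if i = j then (\<integral>z. (norm (U z))\<^sup>2 \<partial>P) else 0)"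
    if "i < n" "j < n" for i j
  proof (cases "i = j")
    case True
    then show ?thesis using diag[OF that(1)] by simp
  next
    case False
    have "finite {..<n}" "i \<in> {..<n}" "j \<in> {..<n}" using that by auto
    note pc = pim_inner_cross[OF P this False U U0]
    then show ?thesis using False by simp
  qed
  have each: "integrable (PiM {..<n} (\<lambda>_. P)) (\<lambda>\<beta>. U (\<beta> i) \<bullet> U (\<beta> j))"
    "(\<integral>\<beta>. U (\<beta> i) \<bullet> U (\<beta> j) \<partial>PiM {..<n} (\<lambda>_. P)) = (if i = j then (\<integral>z. (norm (U z))\<^sup>2 \<partial>P) else 0)"
    if "i < n" "j < n" for i j
    using each0[OF that] by auto
  let ?M = "PiM {..<n} (\<lambda>_. P)"
  have row: "integrable ?M (\<lambda>\<beta>. \<Sum>j<n. U (\<beta> j) \<bullet> U (\<beta> i))" if "i < n" for i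
  proof (rule Bochner_Integration.integrable_sum)
    fix j assume "j \<in> {..<n}"
    then show "integrable ?M (\<lambda>\<beta>. U (\<beta> j) \<bullet> U (\<beta> i))" using each(1)[of j i] that by simp
  qed
  have rowint: "(\<integral>\<beta>. (\<Sum>j<n. U (\<beta> j) \<bullet> U (\<beta> i)) \<partial>?M) = (\<integral>z. (norm (U z))\<^sup>2 \<partial>P)" if "i < n" for i
  proof -
    have "(\<integral>\<beta>. (\<Sum>j<n. U (\<beta> j) \<bullet> U (\<beta> i)) \<partial>?M) = (\<Sum>j<n. (\<integral>\<beta>. U (\<beta> j) \<bullet> U (\<beta> i) \<partial>?M))"
    proof (rule Bochner_Integration.integral_sum)
      fix j assume "j \<in> {..<n}"
      then show "integrable ?M (\<lambda>\<beta>. U (\<beta> j) \<bullet> U (\<beta> i))" using each(1)[of j i] that by simp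
    qed
    also have "\<dots> = (\<Sum>j<n. (if j = i then (\<integral>z. (norm (U z))\<^sup>2 \<partial>P) else 0))"
    proof (rule sum.cong[OF refl])
      fix j assume "j \<in> {..<n}"
      then show "(\<integral>\<beta>. U (\<beta> j) \<bullet> U (\<beta> i) \<partial>?M) = (if j = i then (\<integral>z. (norm (U z))\<^sup>2 \<partial>P) else 0)"
        using each(2)[of j i] that by simp
    qed
    also have "\<dots> = (\<integral>z. (norm (U z))\<^sup>2 \<partial>P)" using that by simp
    finally show ?thesis .
  qed
  have tot: "integrable ?M (\<lambda>\<beta>. \<Sum>i<n. \<Sum>j<n. U (\<beta> j) \<bullet> U (\<beta> i))"
  proof (rule Bochner_Integration.integrable_sum)
    fix i assume "i \<in> {..<n}"
    then have "i < n" by simp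
    then show "integrable ?M (\<lambda>\<beta>. \<Sum>j<n. U (\<beta> j) \<bullet> U (\<beta> i))" by (rule row)
  qed
  then show "integrable ?M (\<lambda>\<beta>. (norm (\<Sum>j<n. U (\<beta> j)))\<^sup>2)"
    by (simp only: eq)
  have "(\<integral>\<beta>. (\<Sum>i<n. \<Sum>j<n. U (\<beta> j) \<bullet> U (\<beta> i)) \<partial>?M)
      = (\<Sum>i<n. (\<integral>\<beta>. (\<Sum>j<n. U (\<beta> j) \<bullet> U (\<beta> i)) \<partial>?M))"
  proof (rule Bochner_Integration.integral_sum)
    fix i assume "i \<in> {..<n}"
    then have "i < n" by simp
    then show "integrable ?M (\<lambda>\<beta>. \<Sum>j<n. U (\<beta> j) \<bullet> U (\<beta> i))" by (rule row)
  qed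
  also have "\<dots> = (\<Sum>i<n. (\<integral>z. (norm (U z))\<^sup>2 \<partial>P))"
    by (rule sum.cong[OF refl], rule rowint) simp
  also have "\<dots> = real n * (\<integral>z. (norm (U z))\<^sup>2 \<partial>P)" by simp
  finally show "(\<integral>\<beta>. (norm (\<Sum>j<n. U (\<beta> j)))\<^sup>2 \<partial>?M) = real n * (\<integral>z. (norm (U z))\<^sup>2 \<partial>P)"
    by (simp only: eq)
qed

lemma nn_bound_integrable:
  fixes f :: "'x \<Rightarrow> real"
  assumes m: "f \<in> borel_measurable M" and nn: "\<And>x. 0 \<le> f x"
    and le: "(\<integral>\<^sup>+x. ennreal (f x) \<partial>M) \<le> ennreal c" and c: "0 \<le> c"
  shows "integrable M f" "integral\<^sup>L M f \<le> c"
proof -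
  have "(\<integral>\<^sup>+x. ennreal (norm (f x)) \<partial>M) = (\<integral>\<^sup>+x. ennreal (f x) \<partial>M)"
    using nn by (intro nn_integral_cong) (simp add: abs_of_nonneg)
  also have "\<dots> < \<infinity>" using le_less_trans[OF le ennreal_less_top] by simp
  finally show int: "integrable M f" by (intro integrableI_bounded m)
  have "ennreal (integral\<^sup>L M f) = (\<integral>\<^sup>+x. ennreal (f x) \<partial>M)"
    using nn_integral_eq_integral[OF int] nn by simp
  with le have "ennreal (integral\<^sup>L M f) \<le> ennreal c" by simp
  then show "integral\<^sup>L M f \<le> c" using c by (simp add: ennreal_le_iff)
qed

lemma norm_add_sq_le:
  fixes a b :: "'a::real_normed_vector"
  shows "(norm (a + b))\<^sup>2 \<le> 2 * (norm a)\<^sup>2 + 2 * (norm b)\<^sup>2"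
proof -
  have "(norm (a + b))\<^sup>2 \<le> (norm a + norm b)\<^sup>2"
    by (rule power_mono[OF norm_triangle_ineq norm_ge_zero])
  moreover have "(norm a + norm b)\<^sup>2 + (norm a - norm b)\<^sup>2 = 2 * (norm a)\<^sup>2 + 2 * (norm b)\<^sup>2"
    by (simp add: power2_eq_square algebra_simps)
  moreover have "0 \<le> (norm a - norm b)\<^sup>2" by simp
  ultimately show ?thesis by linarith
qed

lemma norm_diff_sq_eq:
  fixes u v :: "'a::real_inner"
  shows "(norm (u - v))\<^sup>2 = (norm u)\<^sup>2 - 2 * (u \<bullet> v) + (norm v)\<^sup>2"
  by (simp add: power2_norm_eq_inner inner_diff_left inner_diff_right inner_commute)

lemma norm_add_sq_eq:
  fixes u v :: "'a::real_inner"
  shows "(norm (u + v))\<^sup>2 = (norm u)\<^sup>2 + 2 * (u \<bullet> v) + (norm v)\<^sup>2"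
  by (simp add: power2_norm_eq_inner inner_add_left inner_add_right inner_commute)

lemma marg_transfer:
  fixes h :: "'b \<Rightarrow> 'c::{banach,second_countable_topology}"
  assumes d: "distr Q N g = N" and g: "g \<in> measurable Q N" and h: "h \<in> borel_measurable N"
  shows "integrable Q (\<lambda>p. h (g p)) \<longleftrightarrow> integrable N h"
    and "(\<integral>p. h (g p) \<partial>Q) = integral\<^sup>L N h"
  using integrable_distr_eq[OF g h] integral_distr[OF g h] d by simp_all

lemma (in prob_space) indep_inner_zero:
  fixes f :: "'b \<Rightarrow> 'v::euclidean_space" and g :: "'b \<Rightarrow> 'v"
  assumes ind: "indep_var N1 X N2 Y" and fm: "f \<in> borel_measurable N1" and gm: "g \<in> borel_measurable N2"
    and fi: "integrable M (\<lambda>p. f (X p))" and gi: "integrable M (\<lambda>p. g (Y p))"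
    and f0: "(\<integral>p. f (X p) \<partial>M) = 0"
  shows "integrable M (\<lambda>p. f (X p) \<bullet> g (Y p))" "(\<integral>p. f (X p) \<bullet> g (Y p) \<partial>M) = 0"
proof -
  have eq: "(\<lambda>p. f (X p) \<bullet> g (Y p)) = (\<lambda>p. \<Sum>e\<in>Basis. (f (X p) \<bullet> e) * (g (Y p) \<bullet> e))"
    by (rule ext, rule euclidean_inner)
  have iv: "indep_var borel (\<lambda>p. f (X p) \<bullet> e) borel (\<lambda>p. g (Y p) \<bullet> e)" for e
  proof -
    have m1: "(\<lambda>z. f z \<bullet> e) \<in> measurable N1 borel" using fm by measurable
    have m2: "(\<lambda>z. g z \<bullet> e) \<in> measurable N2 borel" using gm by measurable
    from indep_var_compose[OF ind m1 m2] show ?thesis by (simp add: comp_def)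
  qed
  have i1: "integrable M (\<lambda>p. f (X p) \<bullet> e)" for e using fi by simp
  have i2: "integrable M (\<lambda>p. g (Y p) \<bullet> e)" for e using gi by simp
  have ip: "integrable M (\<lambda>p. (f (X p) \<bullet> e) * (g (Y p) \<bullet> e))" for e
    by (rule indep_var_integrable[OF iv i1 i2])
  have ie: "(\<integral>p. (f (X p) \<bullet> e) * (g (Y p) \<bullet> e) \<partial>M) = 0" for e
  proof -
    have "(\<integral>p. (f (X p) \<bullet> e) * (g (Y p) \<bullet> e) \<partial>M) = (\<integral>p. f (X p) \<bullet> e \<partial>M) * (\<integral>p. g (Y p) \<bullet> e \<partial>M)"
      by (rule indep_var_lebesgue_integral[OF iv i1 i2])
    also have "(\<integral>p. f (X p) \<bullet> e \<partial>M) = 0" using fi f0 by simp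
    finally show ?thesis by simp
  qed
  show "integrable M (\<lambda>p. f (X p) \<bullet> g (Y p))"
    unfolding eq by (rule Bochner_Integration.integrable_sum, rule ip)
  have "(\<integral>p. (\<Sum>e\<in>Basis. (f (X p) \<bullet> e) * (g (Y p) \<bullet> e)) \<partial>M) = (\<Sum>e\<in>Basis. (\<integral>p. (f (X p) \<bullet> e) * (g (Y p) \<bullet> e) \<partial>M))"
    by (rule Bochner_Integration.integral_sum, rule ip)
  also have "\<dots> = 0" by (simp add: ie)
  finally show "(\<integral>p. f (X p) \<bullet> g (Y p) \<partial>M) = 0" unfolding eq .
qed


theorem mainTheorem8:
  fixes P :: "'z measure" and Gs :: "'a::euclidean_space \<Rightarrow> 'z \<Rightarrow> 'a" and G :: "'a \<Rightarrow> 'a"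
    and \<sigma> L \<omega> :: real and b bh :: nat
    and Q :: "((nat \<Rightarrow> 'z) \<times> (nat \<Rightarrow> 'z)) measure"
    and Sbar :: "(nat \<Rightarrow> 'z) \<Rightarrow> 'a"
    and xk xk1 xk2 Sprev :: 'a
  assumes P: "prob_space P"
    and E_int: "\<And>x. integrable P (Gs x)"
    and E_def: "\<And>x. G x = (\<integral>\<zeta>. Gs x \<zeta> \<partial>P)"
    and A_b: "\<And>x. (\<integral>\<^sup>+\<zeta>. ennreal ((norm (Gs x \<zeta> - G x))\<^sup>2) \<partial>P) \<le> ennreal (\<sigma>\<^sup>2)"
    and A_c: "\<And>x y. (\<integral>\<^sup>+\<zeta>. ennreal ((norm (Gs x \<zeta> - Gs y \<zeta>))\<^sup>2) \<partial>P)
                      \<le> ennreal (L\<^sup>2 * (norm (x - y))\<^sup>2)"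
    and \<omega>: "0 < \<omega>" "\<omega> \<le> 1"
    and b: "0 < b" "0 < bh"
    and Q: "prob_space Q" "sets Q = sets (batch_law P b \<Otimes>\<^sub>M batch_law P bh)"
    and Q_fst: "distr Q (batch_law P b) fst = batch_law P b"
    and Q_snd: "distr Q (batch_law P bh) snd = batch_law P bh"
    and Sbar_meas: "Sbar \<in> borel_measurable (batch_law P bh)"
    and Sbar_int: "integrable (batch_law P bh) Sbar"
    and Sbar_mean: "(\<integral>\<beta>. Sbar \<beta> \<partial>batch_law P bh) = 2 *\<^sub>R G xk - G xk1"
  defines "Sk \<equiv> 2 *\<^sub>R G xk - G xk1"
    and "Skm1 \<equiv> 2 *\<^sub>R G xk1 - G xk2"
    and "C \<equiv> (if Q = batch_law P b \<Otimes>\<^sub>M batch_law P bh then 1 else 2 :: real)"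
    and "\<sigma>k2 \<equiv> (\<integral>\<^sup>+\<beta>. ennreal ((norm (Sbar \<beta> - (2 *\<^sub>R G xk - G xk1)))\<^sup>2) \<partial>batch_law P bh)"
  shows "classB_step Q
           (\<lambda>(\<beta>, \<beta>h). vr_est Gs b \<omega> Sprev Sbar xk xk1 xk2 \<beta> \<beta>h - Sk)
           (\<lambda>(\<beta>, \<beta>h). (norm (vr_est Gs b \<omega> Sprev Sbar xk xk1 xk2 \<beta> \<beta>h - Sk))\<^sup>2)
           (Sprev - Skm1) ((norm (Sprev - Skm1))\<^sup>2)
           \<omega> (\<omega> * (2 - \<omega>))
           (8 * C * (1 - \<omega>)\<^sup>2 * L\<^sup>2 / real b) (2 * C * (1 - \<omega>)\<^sup>2 * L\<^sup>2 / real b)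
           ((norm (xk - xk1))\<^sup>2) ((norm (xk1 - xk2))\<^sup>2)
           (ennreal (C * \<omega>\<^sup>2) * \<sigma>k2)"
proof -
  interpret P: prob_space P by (rule P)
  have three: "(3::real) *\<^sub>R v = v + 2 *\<^sub>R v" for v :: 'a
    using scaleR_left_distrib[of 1 2 v] by simp
  interpret Qp: prob_space Q by (rule Q(1))
  define B where "B = batch_law P b"
  define Bh where "Bh = batch_law P bh"
  have B_eq: "B = PiM {..<b} (\<lambda>_. P)" unfolding B_def batch_law_def ..
  have Bh_eq: "Bh = PiM {..<bh} (\<lambda>_. P)" unfolding Bh_def batch_law_def ..
  have PB: "prob_space B" unfolding B_eq by (rule prob_space_PiM) (rule P)
  have PBh: "prob_space Bh" unfolding Bh_eq by (rule prob_space_PiM) (rule P)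
  interpret PB: prob_space B by (rule PB)
  interpret PBh: prob_space Bh by (rule PBh)
  have Gsm[measurable]: "Gs x \<in> borel_measurable P" for x using E_int[of x] by (rule borel_measurable_integrable)
  define m where "m = 2 *\<^sub>R G xk - 3 *\<^sub>R G xk1 + G xk2"
  define Y where "Y \<zeta> = 2 *\<^sub>R Gs xk \<zeta> - 3 *\<^sub>R Gs xk1 \<zeta> + Gs xk2 \<zeta>" for \<zeta>
  define U where "U \<zeta> = Y \<zeta> - m" for \<zeta>
  define D1 where "D1 \<zeta> = Gs xk \<zeta> - Gs xk1 \<zeta>" for \<zeta>
  define D2 where "D2 \<zeta> = Gs xk1 \<zeta> - Gs xk2 \<zeta>" for \<zeta>
  define dx where "dx = (norm (xk - xk1))\<^sup>2"
  define dx' where "dx' = (norm (xk1 - xk2))\<^sup>2"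
  have dx_nn: "0 \<le> dx" "0 \<le> dx'" unfolding dx_def dx'_def by simp_all
  have Yint: "integrable P Y" unfolding Y_def using E_int by auto
  have Ymean: "integral\<^sup>L P Y = m" unfolding Y_def m_def E_def using E_int by simp
  have Uint: "integrable P U" unfolding U_def using Yint by auto
  have Umean: "integral\<^sup>L P U = 0" unfolding U_def using Yint Ymean by (simp add: P.prob_space)
  have D1i: "integrable P (\<lambda>\<zeta>. (norm (D1 \<zeta>))\<^sup>2)" "(\<integral>\<zeta>. (norm (D1 \<zeta>))\<^sup>2 \<partial>P) \<le> L\<^sup>2 * dx"
  proof -
    have mm: "(\<lambda>\<zeta>. (norm (Gs xk \<zeta> - Gs xk1 \<zeta>))\<^sup>2) \<in> borel_measurable P" by measurable
    note nb = nn_bound_integrable[OF mm _ A_c[of xk xk1]]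
    show "integrable P (\<lambda>\<zeta>. (norm (D1 \<zeta>))\<^sup>2)" unfolding D1_def using nb by simp
    show "(\<integral>\<zeta>. (norm (D1 \<zeta>))\<^sup>2 \<partial>P) \<le> L\<^sup>2 * dx" unfolding D1_def dx_def using nb by simp
  qed
  have D2i: "integrable P (\<lambda>\<zeta>. (norm (D2 \<zeta>))\<^sup>2)" "(\<integral>\<zeta>. (norm (D2 \<zeta>))\<^sup>2 \<partial>P) \<le> L\<^sup>2 * dx'"
  proof -
    have mm: "(\<lambda>\<zeta>. (norm (Gs xk1 \<zeta> - Gs xk2 \<zeta>))\<^sup>2) \<in> borel_measurable P" by measurable
    note nb = nn_bound_integrable[OF mm _ A_c[of xk1 xk2]]
    show "integrable P (\<lambda>\<zeta>. (norm (D2 \<zeta>))\<^sup>2)" unfolding D2_def using nb by simp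
    show "(\<integral>\<zeta>. (norm (D2 \<zeta>))\<^sup>2 \<partial>P) \<le> L\<^sup>2 * dx'" unfolding D2_def dx'_def using nb by simp
  qed
  have Y_D: "Y \<zeta> = 2 *\<^sub>R D1 \<zeta> + (- D2 \<zeta>)" for \<zeta>
  proof -
    show ?thesis unfolding Y_def D1_def D2_def three by (simp add: algebra_simps)
  qed
  have Ypt: "(norm (Y \<zeta>))\<^sup>2 \<le> 8 * (norm (D1 \<zeta>))\<^sup>2 + 2 * (norm (D2 \<zeta>))\<^sup>2" for \<zeta>
  proof -
    have "(norm (Y \<zeta>))\<^sup>2 \<le> 2 * (norm (2 *\<^sub>R D1 \<zeta>))\<^sup>2 + 2 * (norm (- D2 \<zeta>))\<^sup>2"
      unfolding Y_D by (rule norm_add_sq_le)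
    also have "\<dots> = 8 * (norm (D1 \<zeta>))\<^sup>2 + 2 * (norm (D2 \<zeta>))\<^sup>2"
      by (simp add: power_mult_distrib)
    finally show ?thesis .
  qed
  have Y2m: "(\<lambda>\<zeta>. (norm (Y \<zeta>))\<^sup>2) \<in> borel_measurable P" unfolding Y_def by measurable
  have Y2i: "integrable P (\<lambda>\<zeta>. (norm (Y \<zeta>))\<^sup>2)"
  proof (rule Bochner_Integration.integrable_bound[OF _ Y2m])
    show "integrable P (\<lambda>\<zeta>. 8 * (norm (D1 \<zeta>))\<^sup>2 + 2 * (norm (D2 \<zeta>))\<^sup>2)"
      using D1i(1) D2i(1) by auto
    show "AE \<zeta> in P. norm ((norm (Y \<zeta>))\<^sup>2) \<le> norm (8 * (norm (D1 \<zeta>))\<^sup>2 + 2 * (norm (D2 \<zeta>))\<^sup>2)"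
      using Ypt by simp
  qed
  have Y2b: "(\<integral>\<zeta>. (norm (Y \<zeta>))\<^sup>2 \<partial>P) \<le> 8 * (L\<^sup>2 * dx) + 2 * (L\<^sup>2 * dx')"
  proof -
    have "(\<integral>\<zeta>. (norm (Y \<zeta>))\<^sup>2 \<partial>P) \<le> (\<integral>\<zeta>. 8 * (norm (D1 \<zeta>))\<^sup>2 + 2 * (norm (D2 \<zeta>))\<^sup>2 \<partial>P)"
      using D1i(1) D2i(1) Y2i Ypt by (intro integral_mono) auto
    also have "\<dots> = 8 * (\<integral>\<zeta>. (norm (D1 \<zeta>))\<^sup>2 \<partial>P) + 2 * (\<integral>\<zeta>. (norm (D2 \<zeta>))\<^sup>2 \<partial>P)"
      using D1i(1) D2i(1) by simp
    also have "\<dots> \<le> 8 * (L\<^sup>2 * dx) + 2 * (L\<^sup>2 * dx')"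
      using D1i(2) D2i(2) by linarith
    finally show ?thesis .
  qed
  have U2eq: "(norm (U \<zeta>))\<^sup>2 = (norm (Y \<zeta>))\<^sup>2 - 2 * (Y \<zeta> \<bullet> m) + (norm m)\<^sup>2" for \<zeta>
    unfolding U_def by (rule norm_diff_sq_eq)
  have U2i: "integrable P (\<lambda>\<zeta>. (norm (U \<zeta>))\<^sup>2)"
    unfolding U2eq using Y2i Yint by auto
  have U2b: "(\<integral>\<zeta>. (norm (U \<zeta>))\<^sup>2 \<partial>P) \<le> 8 * (L\<^sup>2 * dx) + 2 * (L\<^sup>2 * dx')"
  proof -
    have "(\<integral>\<zeta>. (norm (U \<zeta>))\<^sup>2 \<partial>P) = (\<integral>\<zeta>. (norm (Y \<zeta>))\<^sup>2 \<partial>P) - 2 * (m \<bullet> m) + (norm m)\<^sup>2"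
      unfolding U2eq using Y2i Yint Ymean by (simp add: P.prob_space)
    also have "\<dots> = (\<integral>\<zeta>. (norm (Y \<zeta>))\<^sup>2 \<partial>P) - (norm m)\<^sup>2"
      by (simp add: power2_norm_eq_inner)
    also have "\<dots> \<le> (\<integral>\<zeta>. (norm (Y \<zeta>))\<^sup>2 \<partial>P)" by simp
    finally show ?thesis using Y2b by linarith
  qed
  define Z where "Z \<beta> = (1 / real b) *\<^sub>R (\<Sum>j<b. U (\<beta> j))" for \<beta> :: "nat \<Rightarrow> 'z"
  have Um[measurable]: "U \<in> borel_measurable P" using Uint by (rule borel_measurable_integrable)
  have Ucomp: "integrable B (\<lambda>\<beta>. U (\<beta> j))" "(\<integral>\<beta>. U (\<beta> j) \<partial>B) = 0" if "j < b" for j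
    using pim_comp[OF P _ Um, of j "{..<b}"] that Uint Umean unfolding B_eq by simp_all
  have Sint: "integrable B (\<lambda>\<beta>. \<Sum>j<b. U (\<beta> j))"
    by (rule Bochner_Integration.integrable_sum) (simp add: Ucomp)
  have Zint: "integrable B Z" unfolding Z_def using Sint by simp
  have Zmean: "integral\<^sup>L B Z = 0"
  proof -
    have "(\<integral>\<beta>. (\<Sum>j<b. U (\<beta> j)) \<partial>B) = (\<Sum>j<b. (\<integral>\<beta>. U (\<beta> j) \<partial>B))"
      by (rule Bochner_Integration.integral_sum) (simp add: Ucomp)
    also have "\<dots> = 0" by (simp add: Ucomp)
    finally show ?thesis unfolding Z_def by simp
  qed
  have Zm[measurable]: "Z \<in> borel_measurable B" using Zint by (rule borel_measurable_integrable)
  have S2: "integrable B (\<lambda>\<beta>. (norm (\<Sum>j<b. U (\<beta> j)))\<^sup>2)"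
     "(\<integral>\<beta>. (norm (\<Sum>j<b. U (\<beta> j)))\<^sup>2 \<partial>B) = real b * (\<integral>z. (norm (U z))\<^sup>2 \<partial>P)"
    using pim_sum_sq[OF P Uint Umean U2i, of b] unfolding B_eq by simp_all
  have Z2eq: "(norm (Z \<beta>))\<^sup>2 = (1 / real b)\<^sup>2 * (norm (\<Sum>j<b. U (\<beta> j)))\<^sup>2" for \<beta>
    unfolding Z_def by (simp add: power_divide)
  have Z2i: "integrable B (\<lambda>\<beta>. (norm (Z \<beta>))\<^sup>2)"
    unfolding Z2eq using S2(1) by simp
  have Z2b: "(\<integral>\<beta>. (norm (Z \<beta>))\<^sup>2 \<partial>B) \<le> (8 * (L\<^sup>2 * dx) + 2 * (L\<^sup>2 * dx')) / real b"
  proof -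
    have "(\<integral>\<beta>. (norm (Z \<beta>))\<^sup>2 \<partial>B) = (1 / real b)\<^sup>2 * (real b * (\<integral>z. (norm (U z))\<^sup>2 \<partial>P))"
      unfolding Z2eq using S2 by simp
    also have "\<dots> = (\<integral>z. (norm (U z))\<^sup>2 \<partial>P) / real b"
      using b(1) by (simp add: power2_eq_square field_simps)
    also have "\<dots> \<le> (8 * (L\<^sup>2 * dx) + 2 * (L\<^sup>2 * dx')) / real b"
      using U2b b(1) by (simp add: divide_right_mono)
    finally show ?thesis .
  qed
  define W where "W \<beta> = Sbar \<beta> - Sk" for \<beta> :: "nat \<Rightarrow> 'z"
  have Wm[measurable]: "W \<in> borel_measurable Bh" unfolding W_def Bh_def using Sbar_meas by measurable
  have Sbi: "integrable Bh Sbar" using Sbar_int unfolding Bh_def .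
  have Wint: "integrable Bh W" unfolding W_def
    by (intro Bochner_Integration.integrable_diff Sbi PBh.integrable_const)
  have Wmean: "integral\<^sup>L Bh W = 0"
  proof -
    have "integral\<^sup>L Bh W = integral\<^sup>L Bh Sbar - integral\<^sup>L Bh (\<lambda>_. Sk)"
      unfolding W_def by (intro Bochner_Integration.integral_diff Sbi PBh.integrable_const)
    also have "\<dots> = 0" using Sbar_mean PBh.prob_space unfolding Bh_def Sk_def by simp
    finally show ?thesis .
  qed
  define A where "A = (1 - \<omega>) *\<^sub>R (Sprev - Skm1)"
  have m_eq: "m = Sk - Skm1" unfolding m_def Sk_def Skm1_def three by (simp add: algebra_simps)
  have bo: "2 *\<^sub>R batch_op Gs b \<beta> xk - 3 *\<^sub>R batch_op Gs b \<beta> xk1 + batch_op Gs b \<beta> xk2 = m + Z \<beta>" for \<beta>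
  proof -
    have s1: "(\<Sum>j<b. Y (\<beta> j)) = 2 *\<^sub>R (\<Sum>j<b. Gs xk (\<beta> j)) - 3 *\<^sub>R (\<Sum>j<b. Gs xk1 (\<beta> j)) + (\<Sum>j<b. Gs xk2 (\<beta> j))"
      unfolding Y_def by (simp add: sum.distrib sum_subtractf scaleR_sum_right)
    have s2: "(\<Sum>j<b. Y (\<beta> j)) = (\<Sum>j<b. U (\<beta> j)) + real b *\<^sub>R m"
      unfolding U_def by (simp add: sum_subtractf sum_constant_scaleR)
    have "2 *\<^sub>R batch_op Gs b \<beta> xk - 3 *\<^sub>R batch_op Gs b \<beta> xk1 + batch_op Gs b \<beta> xk2
        = (1 / real b) *\<^sub>R (\<Sum>j<b. Y (\<beta> j))"
      unfolding s1 batch_op_def by (simp add: algebra_simps)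
    also have "\<dots> = m + Z \<beta>" unfolding s2 Z_def using b(1) by (simp add: algebra_simps)
    finally show ?thesis .
  qed
  have key: "vr_est Gs b \<omega> Sprev Sbar xk xk1 xk2 \<beta> \<beta>h - Sk = A + ((1 - \<omega>) *\<^sub>R Z \<beta> + \<omega> *\<^sub>R W \<beta>h)" for \<beta> \<beta>h
  proof -
    have "Sprev + 2 *\<^sub>R batch_op Gs b \<beta> xk - 3 *\<^sub>R batch_op Gs b \<beta> xk1 + batch_op Gs b \<beta> xk2
        = Sprev + (2 *\<^sub>R batch_op Gs b \<beta> xk - 3 *\<^sub>R batch_op Gs b \<beta> xk1 + batch_op Gs b \<beta> xk2)"
      by (simp add: algebra_simps)
    also have "\<dots> = Sprev + (Sk - Skm1) + Z \<beta>" unfolding bo m_eq by (simp add: algebra_simps)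
    finally have e1: "Sprev + 2 *\<^sub>R batch_op Gs b \<beta> xk - 3 *\<^sub>R batch_op Gs b \<beta> xk1 + batch_op Gs b \<beta> xk2
        = Sprev + (Sk - Skm1) + Z \<beta>" .
    show ?thesis unfolding vr_est_def e1 A_def W_def by (simp add: algebra_simps)
  qed
  have QsB: "sets Q = sets (B \<Otimes>\<^sub>M Bh)" using Q(2) unfolding B_def Bh_def .
  have fstm[measurable]: "fst \<in> measurable Q B"
    by (subst measurable_cong_sets[OF QsB refl]) (rule measurable_fst)
  have sndm[measurable]: "snd \<in> measurable Q Bh"
    by (subst measurable_cong_sets[OF QsB refl]) (rule measurable_snd)
  have dfst: "distr Q B fst = B" using Q_fst unfolding B_def .
  have dsnd: "distr Q Bh snd = Bh" using Q_snd unfolding Bh_def .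
  have Z2m: "(\<lambda>\<beta>. (norm (Z \<beta>))\<^sup>2) \<in> borel_measurable B" by measurable
  have W2m: "(\<lambda>\<beta>. (norm (W \<beta>))\<^sup>2) \<in> borel_measurable Bh" by measurable
  have ZQ: "integrable Q (\<lambda>p. Z (fst p))" "(\<integral>p. Z (fst p) \<partial>Q) = 0"
    using marg_transfer[OF dfst fstm Zm] Zint Zmean by simp_all
  have Z2Q: "integrable Q (\<lambda>p. (norm (Z (fst p)))\<^sup>2)"
    "(\<integral>p. (norm (Z (fst p)))\<^sup>2 \<partial>Q) = (\<integral>\<beta>. (norm (Z \<beta>))\<^sup>2 \<partial>B)"
    using marg_transfer[OF dfst fstm Z2m] Z2i by simp_all
  have WQ: "integrable Q (\<lambda>p. W (snd p))" "(\<integral>p. W (snd p) \<partial>Q) = 0"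
    using marg_transfer[OF dsnd sndm Wm] Wint Wmean by simp_all
  have W2Q: "(\<integral>p. (norm (W (snd p)))\<^sup>2 \<partial>Q) = (\<integral>\<beta>. (norm (W \<beta>))\<^sup>2 \<partial>Bh)"
    "integrable Q (\<lambda>p. (norm (W (snd p)))\<^sup>2) \<longleftrightarrow> integrable Bh (\<lambda>\<beta>. (norm (W \<beta>))\<^sup>2)"
    using marg_transfer[OF dsnd sndm W2m] by simp_all
  define X where "X p = (1 - \<omega>) *\<^sub>R Z (fst p) + \<omega> *\<^sub>R W (snd p)" for p
  have Xint: "integrable Q X" unfolding X_def using ZQ WQ by simp
  have Xmean: "integral\<^sup>L Q X = 0" unfolding X_def using ZQ WQ by simp
  define E0 where "E0 = (\<lambda>(\<beta>, \<beta>h). vr_est Gs b \<omega> Sprev Sbar xk xk1 xk2 \<beta> \<beta>h - Sk)"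
  define Dl0 where "Dl0 = (\<lambda>(\<beta>, \<beta>h). (norm (vr_est Gs b \<omega> Sprev Sbar xk xk1 xk2 \<beta> \<beta>h - Sk))\<^sup>2)"
  have E0_eq: "E0 p = A + X p" for p
    unfolding E0_def X_def by (cases p) (simp add: key)
  have Dl0_eq: "Dl0 p = (norm (A + X p))\<^sup>2" for p
    unfolding Dl0_def X_def by (cases p) (simp add: key)
  have E0int: "integrable Q E0" unfolding E0_eq[abs_def] using Xint by simp
  have E0mean: "integral\<^sup>L Q E0 = A" unfolding E0_eq[abs_def] using Xint Xmean Qp.prob_space by simp
  have C_cases: "C = 1 \<or> C = 2" unfolding C_def by simp
  have C_pos: "0 < C" using C_cases by auto
  have kappa: "1 - \<omega> * (2 - \<omega>) = (1 - \<omega>)\<^sup>2" by (simp add: power2_eq_square algebra_simps)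
  have A2: "(norm A)\<^sup>2 = (1 - \<omega>)\<^sup>2 * (norm (Sprev - Skm1))\<^sup>2"
    unfolding A_def using \<omega> by (simp add: power_mult_distrib)
  have sig_eq: "\<sigma>k2 = (\<integral>\<^sup>+\<beta>. ennreal ((norm (W \<beta>))\<^sup>2) \<partial>Bh)"
    unfolding \<sigma>k2_def W_def Bh_def Sk_def ..
  define R where "R = (1 - \<omega> * (2 - \<omega>)) * (norm (Sprev - Skm1))\<^sup>2
      + (8 * C * (1 - \<omega>)\<^sup>2 * L\<^sup>2 / real b) * dx + (2 * C * (1 - \<omega>)\<^sup>2 * L\<^sup>2 / real b) * dx'"
  have R_nn: "0 \<le> R" unfolding R_def kappa using C_pos dx_nn by simp
  have main: "(\<integral>\<^sup>+p. ennreal (Dl0 p) \<partial>Q) \<le> ennreal R + ennreal (C * \<omega>\<^sup>2) * \<sigma>k2"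
  proof (cases "\<sigma>k2 = \<top>")
    case True
    have "ennreal (C * \<omega>\<^sup>2) \<noteq> 0" using C_pos \<omega> by simp
    then have "ennreal R + ennreal (C * \<omega>\<^sup>2) * \<sigma>k2 = \<top>" using True by (simp add: ennreal_mult_top)
    then show ?thesis by simp
  next
    case False
    then have sfin: "\<sigma>k2 < \<top>" by (simp add: less_top)
    have W2i: "integrable Bh (\<lambda>\<beta>. (norm (W \<beta>))\<^sup>2)"
      using nn_bound_integrable(1)[OF W2m _ _ enn2real_nonneg, of "\<sigma>k2"] sfin sig_eq by simp
    define w where "w = (\<integral>\<beta>. (norm (W \<beta>))\<^sup>2 \<partial>Bh)"
    have w_nn: "0 \<le> w" unfolding w_def by simp
    have sig_w: "\<sigma>k2 = ennreal w"
      unfolding sig_eq w_def using nn_integral_eq_integral[OF W2i] by simp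
    have W2Qi: "integrable Q (\<lambda>p. (norm (W (snd p)))\<^sup>2)" using W2Q(2) W2i by simp
    have Xpt: "(norm (X p))\<^sup>2 \<le> 2 * (1 - \<omega>)\<^sup>2 * (norm (Z (fst p)))\<^sup>2 + 2 * \<omega>\<^sup>2 * (norm (W (snd p)))\<^sup>2" for p
    proof -
      have "(norm (X p))\<^sup>2 \<le> 2 * (norm ((1 - \<omega>) *\<^sub>R Z (fst p)))\<^sup>2 + 2 * (norm (\<omega> *\<^sub>R W (snd p)))\<^sup>2"
        unfolding X_def by (rule norm_add_sq_le)
      also have "\<dots> = 2 * (1 - \<omega>)\<^sup>2 * (norm (Z (fst p)))\<^sup>2 + 2 * \<omega>\<^sup>2 * (norm (W (snd p)))\<^sup>2"
        by (simp add: power_mult_distrib)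
      finally show ?thesis .
    qed
    have Xm: "X \<in> borel_measurable Q" using Xint by (rule borel_measurable_integrable)
    have X2m: "(\<lambda>p. (norm (X p))\<^sup>2) \<in> borel_measurable Q" using Xm by measurable
    have bnd_int: "integrable Q (\<lambda>p. 2 * (1 - \<omega>)\<^sup>2 * (norm (Z (fst p)))\<^sup>2 + 2 * \<omega>\<^sup>2 * (norm (W (snd p)))\<^sup>2)"
      using Z2Q(1) W2Qi by simp
    have X2i: "integrable Q (\<lambda>p. (norm (X p))\<^sup>2)"
    proof (rule Bochner_Integration.integrable_bound[OF bnd_int X2m])
      show "AE p in Q. norm ((norm (X p))\<^sup>2) \<le> norm (2 * (1 - \<omega>)\<^sup>2 * (norm (Z (fst p)))\<^sup>2 + 2 * \<omega>\<^sup>2 * (norm (W (snd p)))\<^sup>2)"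
        using Xpt by (intro AE_I2) (simp add: abs_of_nonneg order_trans[OF _ Xpt])
    qed
    define z where "z = (\<integral>\<beta>. (norm (Z \<beta>))\<^sup>2 \<partial>B)"
    have X2b: "(\<integral>p. (norm (X p))\<^sup>2 \<partial>Q) \<le> C * ((1 - \<omega>)\<^sup>2 * z + \<omega>\<^sup>2 * w)"
    proof (cases "Q = B \<Otimes>\<^sub>M Bh")
      case True
      then have C1: "C = 1" unfolding C_def B_def Bh_def by simp
      have ind: "Qp.indep_var B fst Bh snd"
      proof -
        have "distr Q (B \<Otimes>\<^sub>M Bh) (\<lambda>x. (fst x, snd x)) = distr Q (B \<Otimes>\<^sub>M Bh) (\<lambda>x. x)" by simp
        also have "\<dots> = Q" by (rule distr_id2) (simp add: QsB)
        finally have "distr Q B fst \<Otimes>\<^sub>M distr Q Bh snd = distr Q (B \<Otimes>\<^sub>M Bh) (\<lambda>x. (fst x, snd x))"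
          using True dfst dsnd by simp
        then show ?thesis using Qp.indep_var_distribution_eq fstm sndm by blast
      qed
      note cr = Qp.indep_inner_zero[where f=Z and g=W and X=fst and Y=snd, OF ind Zm Wm ZQ(1) WQ(1) ZQ(2)]
      have X2eq: "(norm (X p))\<^sup>2 = (1 - \<omega>)\<^sup>2 * (norm (Z (fst p)))\<^sup>2 + (2 * ((1 - \<omega>) * \<omega>)) * (Z (fst p) \<bullet> W (snd p))
          + \<omega>\<^sup>2 * (norm (W (snd p)))\<^sup>2" for p
      proof -
        have n1: "(norm ((1 - \<omega>) *\<^sub>R Z (fst p)))\<^sup>2 = (1 - \<omega>)\<^sup>2 * (norm (Z (fst p)))\<^sup>2"
          by (simp add: power_mult_distrib)
        have n2: "(norm (\<omega> *\<^sub>R W (snd p)))\<^sup>2 = \<omega>\<^sup>2 * (norm (W (snd p)))\<^sup>2"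
          by (simp add: power_mult_distrib)
        have n3: "((1 - \<omega>) *\<^sub>R Z (fst p)) \<bullet> (\<omega> *\<^sub>R W (snd p)) = ((1 - \<omega>) * \<omega>) * (Z (fst p) \<bullet> W (snd p))"
          by simp
        show ?thesis unfolding X_def norm_add_sq_eq n1 n2 n3 by (simp add: mult.assoc)
      qed
      have "(\<integral>p. (norm (X p))\<^sup>2 \<partial>Q) = (1 - \<omega>)\<^sup>2 * z + \<omega>\<^sup>2 * w"
        unfolding X2eq using Z2Q W2Q W2Qi cr by (simp add: z_def w_def)
      then show ?thesis using C1 by simp
    next
      case False
      then have C2: "C = 2" unfolding C_def B_def Bh_def by simp
      have "(\<integral>p. (norm (X p))\<^sup>2 \<partial>Q) \<le> (\<integral>p. 2 * (1 - \<omega>)\<^sup>2 * (norm (Z (fst p)))\<^sup>2 + 2 * \<omega>\<^sup>2 * (norm (W (snd p)))\<^sup>2 \<partial>Q)"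
        using X2i bnd_int Xpt by (intro integral_mono) auto
      also have "\<dots> = 2 * (1 - \<omega>)\<^sup>2 * z + 2 * \<omega>\<^sup>2 * w"
        using Z2Q W2Q W2Qi by (simp add: z_def w_def)
      finally show ?thesis using C2 by (simp add: algebra_simps)
    qed
    have E2eq: "(norm (A + X p))\<^sup>2 = (norm A)\<^sup>2 + 2 * (A \<bullet> X p) + (norm (X p))\<^sup>2" for p
      by (rule norm_add_sq_eq)
    have E2i: "integrable Q (\<lambda>p. (norm (A + X p))\<^sup>2)" unfolding E2eq using X2i Xint by simp
    have E2int: "(\<integral>p. (norm (A + X p))\<^sup>2 \<partial>Q) = (norm A)\<^sup>2 + (\<integral>p. (norm (X p))\<^sup>2 \<partial>Q)"
      unfolding E2eq using X2i Xint Xmean Qp.prob_space by simp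
    have zb: "z \<le> (8 * (L\<^sup>2 * dx) + 2 * (L\<^sup>2 * dx')) / real b" unfolding z_def by (rule Z2b)
    have "C * ((1 - \<omega>)\<^sup>2 * z) \<le> C * ((1 - \<omega>)\<^sup>2 * ((8 * (L\<^sup>2 * dx) + 2 * (L\<^sup>2 * dx')) / real b))"
      using zb C_pos by (intro mult_left_mono) auto
    also have "\<dots> = (8 * C * (1 - \<omega>)\<^sup>2 * L\<^sup>2 / real b) * dx + (2 * C * (1 - \<omega>)\<^sup>2 * L\<^sup>2 / real b) * dx'"
      by (simp add: field_simps add_divide_distrib)
    finally have Cz: "C * ((1 - \<omega>)\<^sup>2 * z) \<le> (8 * C * (1 - \<omega>)\<^sup>2 * L\<^sup>2 / real b) * dx + (2 * C * (1 - \<omega>)\<^sup>2 * L\<^sup>2 / real b) * dx'" .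
    have real_bound: "(\<integral>p. (norm (A + X p))\<^sup>2 \<partial>Q) \<le> R + C * \<omega>\<^sup>2 * w"
      using E2int X2b Cz A2 unfolding R_def kappa by (simp add: algebra_simps)
    have "(\<integral>\<^sup>+p. ennreal (Dl0 p) \<partial>Q) = ennreal (\<integral>p. (norm (A + X p))\<^sup>2 \<partial>Q)"
      unfolding Dl0_eq using nn_integral_eq_integral[OF E2i] by simp
    also have "\<dots> \<le> ennreal (R + C * \<omega>\<^sup>2 * w)" using real_bound by (rule ennreal_leI)
    also have "\<dots> = ennreal R + ennreal (C * \<omega>\<^sup>2) * \<sigma>k2"
      using R_nn C_pos w_nn unfolding sig_w by (simp add: ennreal_mult)
    finally show ?thesis .
  qed
  have Dl0_nn: "\<forall>w\<in>space Q. 0 \<le> Dl0 w" unfolding Dl0_eq by simp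
  have nn_eq: "(\<integral>\<^sup>+w. ennreal ((norm (E0 w))\<^sup>2) \<partial>Q) \<le> (\<integral>\<^sup>+w. ennreal (Dl0 w) \<partial>Q)"
    unfolding E0_eq Dl0_eq by simp
  have par: "0 < \<omega>" "\<omega> \<le> 1" "0 < \<omega> * (2 - \<omega>)" "\<omega> * (2 - \<omega>) \<le> 1"
      "0 \<le> 8 * C * (1 - \<omega>)\<^sup>2 * L\<^sup>2 / real b" "0 \<le> 2 * C * (1 - \<omega>)\<^sup>2 * L\<^sup>2 / real b"
  proof -
    have "0 \<le> (1 - \<omega>)\<^sup>2" by simp
    then show "\<omega> * (2 - \<omega>) \<le> 1" using kappa by linarith
    show "0 < \<omega> * (2 - \<omega>)" using \<omega> by (intro mult_pos_pos) auto
    show "0 < \<omega>" "\<omega> \<le> 1" using \<omega> by auto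
    show "0 \<le> 8 * C * (1 - \<omega>)\<^sup>2 * L\<^sup>2 / real b" "0 \<le> 2 * C * (1 - \<omega>)\<^sup>2 * L\<^sup>2 / real b"
      using C_pos by (intro divide_nonneg_nonneg mult_nonneg_nonneg; simp)+
  qed
  show ?thesis
    unfolding classB_step_def E0_def[symmetric] Dl0_def[symmetric]
    using par Dl0_nn E0int E0mean nn_eq main unfolding R_def dx_def dx'_def A_def
    by simp
qed


end
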